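(* Let $(M,\mathbf{p})$ be a projective manifold. If at some point $x\in M$ the map $\Psi_x:T_xM\to\Lambda^2T_x^*M\otimes T_xM$, $\xi^a\mapsto W_{ab}{}^c{}_d\xi^d$, has trivial kernel, then $\mathbf{p}$ is not induced by (i.e. does not contain) the Levi-Civita connection of a Sasaki structure on $M$.
   Context: A projective structure $\mathbf{p}$ is an equivalence class of torsion-free affine connections with the same unparametrised geodesics. For $\nabla\in\mathbf{p}$ (on $M$ of dimension $n+1$), with curvature $R_{ab}{}^c{}_d$ ($R_{ab}{}^c{}_d\xi^d=(\nabla_a\nabla_b-\nabla_b\nabla_a)\xi^c$), Ricci tensor $\mathrm{Ric}_{bd}=R_{cb}{}^c{}_d$ and $\mathsf{P}_{ab}=\frac{1}{n(n+2)}[(n+1)\mathrm{Ric}_{ab}+\mathrm{Ric}_{ba}]$, the projective Weyl curvature $W$ is defined by $R_{ab}{}^c{}_d=W_{ab}{}^c{}_d+2\delta^c{}_{[a}\mathsf{P}_{b]d}-2\mathsf{P}_{[ab]}\delta^c{}_d$; it depends only on $\mathbf{p}$. A Sasaki structure is a pseudo-Riemannian metric $g$ with Levi-Civita connection $\nabla$ and a Killing field $k$ of $g$ with $g_{ab}k^ak^b=1$ and $\nabla_a\nabla_bk^c=-g_{ab}k^c+\delta^c{}_ak_b$. *)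

theory Defs
  imports "HOL-Analysis.Analysis"
begin

text \<open>Local coordinate setting: an open set U of real^'n (dimension n+1 = CARD('n)).
  Tensor fields are given by their components in the standard coordinates.\<close>

definition pd :: "'n::finite \<Rightarrow> (real^'n \<Rightarrow> real) \<Rightarrow> real^'n \<Rightarrow> real" where
  "pd i f x = frechet_derivative f (at x) (axis i 1)"

fun iterpd :: "'n::finite list \<Rightarrow> (real^'n \<Rightarrow> real) \<Rightarrow> real^'n \<Rightarrow> real" where
  "iterpd [] f = f"
| "iterpd (i # is) f = pd i (iterpd is f)"

definition smooth_fun :: "(real^'n::finite) set \<Rightarrow> (real^'n \<Rightarrow> real) \<Rightarrow> bool" where
  "smooth_fun U f \<longleftrightarrow> (\<forall>is. \<forall>x\<in>U. iterpd is f differentiable (at x))"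

text \<open>A connection with Christoffel symbols: G x a b c = Gamma^c_ab at x,
  so that nabla_a xi^c = d_a xi^c + Gamma^c_ab xi^b.\<close>
type_synonym 'n christoffel = "real^'n \<Rightarrow> 'n \<Rightarrow> 'n \<Rightarrow> 'n \<Rightarrow> real"

definition torsion_free_conn :: "(real^'n::finite) set \<Rightarrow> 'n christoffel \<Rightarrow> bool" where
  "torsion_free_conn U G \<longleftrightarrow>
     (\<forall>a b c. smooth_fun U (\<lambda>y. G y a b c)) \<and> (\<forall>x\<in>U. \<forall>a b c. G x a b c = G x b a c)"

text \<open>Curvature R_ab^c_d, with R_ab^c_d xi^d = (nabla_a nabla_b - nabla_b nabla_a) xi^c
  (written out for a torsion-free connection).\<close>
definition curv :: "'n::finite christoffel \<Rightarrow> real^'n \<Rightarrow> 'n \<Rightarrow> 'n \<Rightarrow> 'n \<Rightarrow> 'n \<Rightarrow> real" where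
  "curv G x a b c d =
     pd a (\<lambda>y. G y b d c) x - pd b (\<lambda>y. G y a d c) x
     + (\<Sum>e\<in>UNIV. G x a e c * G x b d e) - (\<Sum>e\<in>UNIV. G x b e c * G x a d e)"

definition ricci :: "'n::finite christoffel \<Rightarrow> real^'n \<Rightarrow> 'n \<Rightarrow> 'n \<Rightarrow> real" where
  "ricci G x b d = (\<Sum>c\<in>UNIV. curv G x c b c d)"

definition schouten :: "'n::finite christoffel \<Rightarrow> real^'n \<Rightarrow> 'n \<Rightarrow> 'n \<Rightarrow> real" where
  "schouten G x a b =
     (let n = real CARD('n) - 1 in ((n + 1) * ricci G x a b + ricci G x b a) / (n * (n + 2)))"

definition kdelta :: "'n \<Rightarrow> 'n \<Rightarrow> real" where
  "kdelta i j = (if i = j then 1 else 0)"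

text \<open>Projective Weyl curvature W_ab^c_d, defined by
  R_ab^c_d = W_ab^c_d + 2 delta^c_[a P_b]d - 2 P_[ab] delta^c_d.\<close>
definition proj_weyl :: "'n::finite christoffel \<Rightarrow> real^'n \<Rightarrow> 'n \<Rightarrow> 'n \<Rightarrow> 'n \<Rightarrow> 'n \<Rightarrow> real" where
  "proj_weyl G x a b c d =
     curv G x a b c d
     - (kdelta c a * schouten G x b d - kdelta c b * schouten G x a d)
     + (schouten G x a b - schouten G x b a) * kdelta c d"

definition pregeodesic :: "(real^'n::finite) set \<Rightarrow> 'n christoffel \<Rightarrow> real set \<Rightarrow> (real \<Rightarrow> real^'n) \<Rightarrow> bool" where
  "pregeodesic U G I \<gamma> \<longleftrightarrow>
     (\<exists>\<gamma>' \<gamma>'' f. \<forall>t\<in>I. \<gamma> t \<in> U \<and>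
        (\<gamma> has_vector_derivative \<gamma>' t) (at t) \<and>
        (\<gamma>' has_vector_derivative \<gamma>'' t) (at t) \<and>
        \<gamma>' t \<noteq> 0 \<and>
        (\<forall>c. \<gamma>'' t $ c + (\<Sum>a\<in>UNIV. \<Sum>b\<in>UNIV. G (\<gamma> t) a b c * \<gamma>' t $ a * \<gamma>' t $ b)
              = f t * \<gamma>' t $ c))"

text \<open>Two connections define the same projective structure iff they have the same
  unparametrised geodesics.\<close>
definition proj_equiv :: "(real^'n::finite) set \<Rightarrow> 'n christoffel \<Rightarrow> 'n christoffel \<Rightarrow> bool" where
  "proj_equiv U G G' \<longleftrightarrow>
     (\<forall>s t \<gamma>. s < t \<longrightarrow> (pregeodesic U G {s<..<t} \<gamma> \<longleftrightarrow> pregeodesic U G' {s<..<t} \<gamma>))"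

definition pseudo_metric :: "(real^'n::finite) set \<Rightarrow> (real^'n \<Rightarrow> 'n \<Rightarrow> 'n \<Rightarrow> real) \<Rightarrow> bool" where
  "pseudo_metric U g \<longleftrightarrow>
     (\<forall>a b. smooth_fun U (\<lambda>y. g y a b)) \<and>
     (\<forall>x\<in>U. (\<forall>a b. g x a b = g x b a) \<and> det (\<chi> i j. g x i j) \<noteq> 0)"

definition levi_civita :: "(real^'n::finite) set \<Rightarrow> (real^'n \<Rightarrow> 'n \<Rightarrow> 'n \<Rightarrow> real) \<Rightarrow> 'n christoffel \<Rightarrow> bool" where
  "levi_civita U g G \<longleftrightarrow>
     (\<forall>x\<in>U. \<forall>a b c. G x a b c = G x b a c) \<and>
     (\<forall>x\<in>U. \<forall>a b c. pd a (\<lambda>y. g y b c) x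
        - (\<Sum>d\<in>UNIV. G x a b d * g x d c) - (\<Sum>d\<in>UNIV. G x a c d * g x b d) = 0)"

definition cov_vec :: "'n::finite christoffel \<Rightarrow> (real^'n \<Rightarrow> real^'n) \<Rightarrow> real^'n \<Rightarrow> 'n \<Rightarrow> 'n \<Rightarrow> real" where
  "cov_vec G k x a c = pd a (\<lambda>y. k y $ c) x + (\<Sum>d\<in>UNIV. G x a d c * k x $ d)"

definition cov2_vec :: "'n::finite christoffel \<Rightarrow> (real^'n \<Rightarrow> real^'n) \<Rightarrow> real^'n \<Rightarrow> 'n \<Rightarrow> 'n \<Rightarrow> 'n \<Rightarrow> real" where
  "cov2_vec G k x a b c =
     pd a (\<lambda>y. cov_vec G k y b c) x
     + (\<Sum>e\<in>UNIV. G x a e c * cov_vec G k x b e)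
     - (\<Sum>e\<in>UNIV. G x a b e * cov_vec G k x e c)"

definition sasaki :: "(real^'n::finite) set \<Rightarrow> (real^'n \<Rightarrow> 'n \<Rightarrow> 'n \<Rightarrow> real) \<Rightarrow> (real^'n \<Rightarrow> real^'n)
                      \<Rightarrow> 'n christoffel \<Rightarrow> bool" where
  "sasaki U g k G \<longleftrightarrow>
     pseudo_metric U g \<and> levi_civita U g G \<and>
     (\<forall>c. smooth_fun U (\<lambda>y. k y $ c)) \<and>
     (\<forall>x\<in>U.
        \<comment> \<open>Killing: nabla_a k_b + nabla_b k_a = 0\<close>
        (\<forall>a b. (\<Sum>c\<in>UNIV. g x b c * cov_vec G k x a c + g x a c * cov_vec G k x b c) = 0) \<and>
        (\<Sum>a\<in>UNIV. \<Sum>b\<in>UNIV. g x a b * k x $ a * k x $ b) = 1 \<and>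
        (\<forall>a b c. cov2_vec G k x a b c =
            - g x a b * k x $ c + kdelta c a * (\<Sum>d\<in>UNIV. g x b d * k x $ d)))"

end

theory Submission
  imports Defs
begin



lemma ifz: "x * (if P then y else 0) = (if P then x * y else (0::real))"
  "(if P then y else 0) * x = (if P then y * x else (0::real))"
  "(if P then y else 0) + (z::real) = (if P then y + z else z)"
  by auto

lemma pd_hasD: "(f has_derivative D) (at x) \<Longrightarrow> pd i f x = D (axis i 1)"
  unfolding pd_def using frechet_derivative_at by metis

lemma pd_works: "f differentiable (at x) \<Longrightarrow> (f has_derivative (\<lambda>h. frechet_derivative f (at x) h)) (at x)"
  using frechet_derivative_works by auto

lemma pd_cong_open:
  assumes "open S" "x \<in> S" "\<And>y. y \<in> S \<Longrightarrow> f y = g y"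
  shows "pd i f x = pd i g x"
proof -
  have "\<And>D. (f has_derivative D) (at x) = (g has_derivative D) (at x)"
    using assms has_derivative_transform_within_open[of f _ x UNIV S g]
      has_derivative_transform_within_open[of g _ x UNIV S f] by auto
  then show ?thesis unfolding pd_def frechet_derivative_def by simp
qed

lemma diff_cong_open:
  assumes "open S" "x \<in> S" "\<And>y. y \<in> S \<Longrightarrow> f y = g y" "g differentiable (at x)"
  shows "f differentiable (at x)"
  using assms has_derivative_transform_within_open[of g _ x UNIV S f] unfolding differentiable_def
  by auto

lemma pd_add: "f differentiable (at x) \<Longrightarrow> g differentiable (at x) \<Longrightarrow>
   pd i (\<lambda>y. f y + g y) x = pd i f x + pd i g x"
  using pd_hasD[OF has_derivative_add[OF pd_works pd_works]] by (simp add: pd_def)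

lemma pd_diff: "f differentiable (at x) \<Longrightarrow> g differentiable (at x) \<Longrightarrow>
   pd i (\<lambda>y. f y - g y) x = pd i f x - pd i g x"
  using pd_hasD[OF has_derivative_diff[OF pd_works pd_works]] by (simp add: pd_def)

lemma pd_mult: "f differentiable (at x) \<Longrightarrow> g differentiable (at x) \<Longrightarrow>
   pd i (\<lambda>y. f y * g y) x = f x * pd i g x + pd i f x * g x"
  using pd_hasD[OF has_derivative_mult[OF pd_works pd_works]] by (simp add: pd_def)

lemma pd_const: "pd i (\<lambda>y. c) x = 0"
  by (rule pd_hasD) (auto intro!: has_derivative_const)

lemma pd_cmult: "f differentiable (at x) \<Longrightarrow> pd i (\<lambda>y. c * f y) x = c * pd i f x"
  using pd_mult[of "\<lambda>y. c" x f i] by (simp add: pd_const)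

lemma pd_sum: "(\<And>a. a \<in> A \<Longrightarrow> f a differentiable (at x)) \<Longrightarrow> finite A \<Longrightarrow>
   pd i (\<lambda>y. \<Sum>a\<in>A. f a y) x = (\<Sum>a\<in>A. pd i (f a) x)"
proof -
  assume a: "\<And>a. a \<in> A \<Longrightarrow> f a differentiable (at x)" "finite A"
  have "((\<lambda>y. \<Sum>a\<in>A. f a y) has_derivative (\<lambda>h. \<Sum>a\<in>A. frechet_derivative (f a) (at x) h)) (at x)"
    by (rule has_derivative_sum) (use a pd_works in auto)
  from pd_hasD[OF this] show ?thesis by (simp add: pd_def)
qed

lemma iterpd_snoc: "iterpd (is @ [i]) f = iterpd is (pd i f)"
  by (induction "is") auto

lemma smooth_diff: "smooth_fun U f \<Longrightarrow> x \<in> U \<Longrightarrow> f differentiable (at x)"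
  unfolding smooth_fun_def by (metis iterpd.simps(1))

lemma smooth_pd: "smooth_fun U f \<Longrightarrow> smooth_fun U (pd i f)"
  unfolding smooth_fun_def by (metis iterpd_snoc)

lemma smooth_cont: "smooth_fun U f \<Longrightarrow> x \<in> U \<Longrightarrow> continuous (at x) f"
  using smooth_diff differentiable_imp_continuous_within by blast






lemma line_deriv:
  assumes "f differentiable (at (p + s *\<^sub>R v))"
  shows "((\<lambda>t. f (p + t *\<^sub>R v)) has_real_derivative frechet_derivative f (at (p + s *\<^sub>R v)) v) (at s)"
proof -
  define D where "D = frechet_derivative f (at (p + s *\<^sub>R v))"
  have fD: "(f has_derivative D) (at (p + s *\<^sub>R v))" using pd_works[OF assms] D_def by simp
  have l: "((\<lambda>t. p + t *\<^sub>R v) has_derivative (\<lambda>t. t *\<^sub>R v)) (at s)"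
    by (auto intro!: derivative_eq_intros)
  have c: "((\<lambda>t. f (p + t *\<^sub>R v)) has_derivative (\<lambda>t. D (t *\<^sub>R v))) (at s)"
    using has_derivative_compose[OF l fD] by simp
  have lin: "linear D" using fD has_derivative_linear by blast
  have "(\<lambda>t. D (t *\<^sub>R v)) = (*) (D v)"
    by (rule ext) (simp add: linear_scale[OF lin])
  with c show ?thesis unfolding has_field_derivative_def D_def by simp
qed

lemma mvt_sym:
  fixes \<phi> :: "real \<Rightarrow> real"
  assumes "h \<noteq> 0" "\<And>s. \<bar>s\<bar> \<le> \<bar>h\<bar> \<Longrightarrow> DERIV \<phi> s :> \<phi>' s"
  shows "\<exists>\<xi>. \<bar>\<xi>\<bar> \<le> \<bar>h\<bar> \<and> \<phi> h - \<phi> 0 = h * \<phi>' \<xi>"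
proof (cases "h > 0")
  case True
  then obtain z where "0 < z" "z < h" "\<phi> h - \<phi> 0 = (h - 0) * \<phi>' z"
    using MVT2[of 0 h \<phi> \<phi>'] assms(2) by force
  then show ?thesis by (intro exI[of _ z]) auto
next
  case False
  then have "h < 0" using assms(1) by simp
  then obtain z where "h < z" "z < 0" "\<phi> 0 - \<phi> h = (0 - h) * \<phi>' z"
    using MVT2[of h 0 \<phi> \<phi>'] assms(2) by force
  then show ?thesis by (intro exI[of _ z]) (auto simp: algebra_simps)
qed

lemma schwarz_lim:
  fixes f :: "real^'n::finite \<Rightarrow> real"
  assumes U: "open U" "x \<in> U" and f: "smooth_fun U f"
  shows "((\<lambda>h. (f (x + h *\<^sub>R axis b 1 + h *\<^sub>R axis a 1) - f (x + h *\<^sub>R axis a 1)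
            - f (x + h *\<^sub>R axis b 1) + f x) / h\<^sup>2) \<longlongrightarrow> pd b (pd a f) x) (at 0)"
proof -
  define ea :: "real^'n" where "ea = axis a 1"
  define eb :: "real^'n" where "eb = axis b 1"
  have nea: "norm ea = 1" "norm eb = 1" by (simp_all add: ea_def eb_def)
  obtain \<rho> where \<rho>: "\<rho> > 0" "ball x \<rho> \<subseteq> U" using U open_contains_ball by blast
  define q where "q = pd a f"
  have qd: "q differentiable (at x)" using smooth_pd[OF f] smooth_diff U q_def by blast
  define Dq where "Dq = frechet_derivative q (at x)"
  have Dq: "(q has_derivative Dq) (at x)" using pd_works[OF qd] Dq_def by simp
  have lin: "linear Dq" using Dq has_derivative_linear by blast
  have pdq: "pd b (pd a f) x = Dq eb" using pd_hasD[OF Dq] q_def eb_def by simp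
  from Dq[unfolded has_derivative_at_alt]
  have approx: "\<forall>e>0. \<exists>d>0. \<forall>y. norm (y - x) < d \<longrightarrow> norm (q y - q x - Dq (y - x)) \<le> e * norm (y - x)"
    by blast
  show ?thesis
    unfolding LIM_eq pdq ea_def[symmetric] eb_def[symmetric]
  proof (intro allI impI)
    fix r :: real assume r: "r > 0"
    obtain d where d: "d > 0" "\<And>y. norm (y - x) < d \<Longrightarrow> norm (q y - q x - Dq (y - x)) \<le> (r/4) * norm (y - x)"
    proof -
      have "r/4 > 0" using r by simp
      from approx[rule_format, OF this] show ?thesis using that by blast
    qed
    show "\<exists>s>0. \<forall>h. h \<noteq> 0 \<and> norm (h - 0) < s \<longrightarrow>
      norm ((f (x + h *\<^sub>R eb + h *\<^sub>R ea) - f (x + h *\<^sub>R ea) - f (x + h *\<^sub>R eb) + f x) / h\<^sup>2 - Dq eb) < r"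
    proof (intro exI[of _ "min d \<rho> / 2"] conjI allI impI)
      show "min d \<rho> / 2 > 0" using d \<rho> by simp
      fix h :: real assume h: "h \<noteq> 0 \<and> norm (h - 0) < min d \<rho> / 2"
      then have h0: "h \<noteq> 0" and hs: "2 * \<bar>h\<bar> < d" "2 * \<bar>h\<bar> < \<rho>" by auto
      define \<phi> where "\<phi> s = f (x + h *\<^sub>R eb + s *\<^sub>R ea) - f (x + s *\<^sub>R ea)" for s
      define \<phi>' where "\<phi>' s = q (x + h *\<^sub>R eb + s *\<^sub>R ea) - q (x + s *\<^sub>R ea)" for s
      have der: "DERIV \<phi> s :> \<phi>' s" if s: "\<bar>s\<bar> \<le> \<bar>h\<bar>" for s
      proof -
        have n1: "norm (h *\<^sub>R eb + s *\<^sub>R ea) \<le> 2 * \<bar>h\<bar>"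
          using norm_triangle_ineq[of "h *\<^sub>R eb" "s *\<^sub>R ea"] nea s by simp
        have n2: "norm (s *\<^sub>R ea) \<le> 2 * \<bar>h\<bar>" using nea s by simp
        have nn: "norm (x - (x + (h *\<^sub>R eb + s *\<^sub>R ea))) = norm (h *\<^sub>R eb + s *\<^sub>R ea)"
          by (metis add_diff_cancel_left' norm_minus_commute)
        have i1: "x + h *\<^sub>R eb + s *\<^sub>R ea \<in> U"
          using \<rho> n1 hs nn subsetD[OF \<rho>(2), of "x + (h *\<^sub>R eb + s *\<^sub>R ea)"]
          by (auto simp: dist_norm add.assoc)
        have i2: "x + s *\<^sub>R ea \<in> U"
          using \<rho> n2 hs by (auto simp: dist_norm intro!: subsetD[OF \<rho>(2)])
        have d1: "f differentiable (at (x + h *\<^sub>R eb + s *\<^sub>R ea))" using smooth_diff[OF f i1] .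
        have d2: "f differentiable (at (x + s *\<^sub>R ea))" using smooth_diff[OF f i2] .
        show ?thesis
          unfolding \<phi>_def \<phi>'_def q_def pd_def ea_def[symmetric]
          by (intro DERIV_diff line_deriv d1 d2)
      qed
      obtain \<xi> where \<xi>: "\<bar>\<xi>\<bar> \<le> \<bar>h\<bar>" "\<phi> h - \<phi> 0 = h * \<phi>' \<xi>"
        using mvt_sym[OF h0 der] by blast
      have \<Delta>: "f (x + h *\<^sub>R eb + h *\<^sub>R ea) - f (x + h *\<^sub>R ea) - f (x + h *\<^sub>R eb) + f x = h * \<phi>' \<xi>"
        using \<xi>(2) unfolding \<phi>_def by simp
      define P1 where "P1 = x + h *\<^sub>R eb + \<xi> *\<^sub>R ea"
      define P2 where "P2 = x + \<xi> *\<^sub>R ea"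
      have nP1: "norm (P1 - x) \<le> 2 * \<bar>h\<bar>"
        using norm_triangle_ineq[of "h *\<^sub>R eb" "\<xi> *\<^sub>R ea"] nea \<xi>(1) by (simp add: P1_def)
      have nP2: "norm (P2 - x) \<le> \<bar>h\<bar>" using nea \<xi>(1) by (simp add: P2_def)
      have e1: "norm (q P1 - q x - Dq (P1 - x)) \<le> (r/4) * norm (P1 - x)"
        using d(2)[of P1] nP1 hs by simp
      have e2: "norm (q P2 - q x - Dq (P2 - x)) \<le> (r/4) * norm (P2 - x)"
        using d(2)[of P2] nP2 hs by simp
      have lind: "Dq (P1 - x) - Dq (P2 - x) = h * Dq eb"
        by (simp add: P1_def P2_def linear_add[OF lin] linear_scale[OF lin])
      have "\<phi>' \<xi> - h * Dq eb = (q P1 - q x - Dq (P1 - x)) - (q P2 - q x - Dq (P2 - x))"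
        using lind unfolding \<phi>'_def P1_def P2_def by (simp add: algebra_simps)
      then have "\<bar>\<phi>' \<xi> - h * Dq eb\<bar> \<le> (r/4) * (2 * \<bar>h\<bar>) + (r/4) * \<bar>h\<bar>"
        using e1 e2 nP1 nP2 r
        by (smt (verit, best) mult_left_mono real_norm_def zero_le_divide_iff)
      moreover have "0 < r * \<bar>h\<bar>" using r h0 by simp
      ultimately have bnd: "\<bar>\<phi>' \<xi> - h * Dq eb\<bar> < r * \<bar>h\<bar>" by linarith
      have "(h * \<phi>' \<xi>) / h\<^sup>2 - Dq eb = (\<phi>' \<xi> - h * Dq eb) / h"
        using h0 by (simp add: power2_eq_square field_simps)
      then have "\<bar>(h * \<phi>' \<xi>) / h\<^sup>2 - Dq eb\<bar> < r"
        using bnd h0 by (simp add: abs_divide divide_less_eq)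
      then show "norm ((f (x + h *\<^sub>R eb + h *\<^sub>R ea) - f (x + h *\<^sub>R ea) - f (x + h *\<^sub>R eb) + f x) / h\<^sup>2 - Dq eb) < r"
        using \<Delta> by simp
    qed
  qed
qed

lemma schwarz:
  fixes f :: "real^'n::finite \<Rightarrow> real"
  assumes U: "open U" "x \<in> U" and f: "smooth_fun U f"
  shows "pd a (pd b f) x = pd b (pd a f) x"
proof -
  note l1 = schwarz_lim[OF U f, of b a]
  note l2 = schwarz_lim[OF U f, of a b]
  have e: "(\<lambda>h. (f (x + h *\<^sub>R axis a 1 + h *\<^sub>R axis b 1) - f (x + h *\<^sub>R axis b 1)
            - f (x + h *\<^sub>R axis a 1) + f x) / h\<^sup>2) = (\<lambda>h. (f (x + h *\<^sub>R axis b 1 + h *\<^sub>R axis a 1) - f (x + h *\<^sub>R axis a 1)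
            - f (x + h *\<^sub>R axis b 1) + f x) / h\<^sup>2)"
    by (rule ext) (simp add: algebra_simps)
  show ?thesis using tendsto_unique[OF at_neq_bot l1] l2 e by (metis (no_types, lifting))
qed




lemma int_bound:
  fixes f :: "real \<Rightarrow> 'z::euclidean_space"
  assumes "continuous_on {a..b} f" "a \<le> b" "0 \<le> B" "\<And>s. s \<in> {a..b} \<Longrightarrow> norm (f s) \<le> B"
  shows "norm (integral {a..b} f) \<le> B * (b - a)"
  using integrable_bound[of B f a b] assms integrable_continuous_real[OF assms(1)] by simp

lemma ode_exists:
  fixes F :: "'z::euclidean_space \<Rightarrow> 'z"
  assumes L: "L-lipschitz_on (cball z0 r) F" and r: "r > 0"
  shows "\<exists>h>0. \<exists>\<phi>. \<phi> 0 = z0 \<and> (\<forall>t\<in>{-h<..<h}. \<phi> t \<in> cball z0 r \<and> (\<phi> has_vector_derivative F (\<phi> t)) (at t))"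
proof -
  have L0: "L \<ge> 0" using L lipschitz_on_nonneg by blast
  define P where "P = closest_point (cball z0 r)"
  have Pin: "P z \<in> cball z0 r" for z unfolding P_def using r by (intro closest_point_in_set) auto
  have Plip: "dist (P z) (P w) \<le> dist z w" for z w
    unfolding P_def using r by (intro closest_point_lipschitz) auto
  define Fp where "Fp z = F (P z)" for z
  have Fplip: "dist (Fp z) (Fp w) \<le> L * dist z w" for z w
  proof -
    have "dist (Fp z) (Fp w) \<le> L * dist (P z) (P w)"
      unfolding Fp_def using lipschitz_onD[OF L Pin Pin] .
    also have "\<dots> \<le> L * dist z w" using Plip L0 by (simp add: mult_left_mono)
    finally show ?thesis .
  qed
  have Fpcont: "continuous_on UNIV Fp"
    by (rule lipschitz_on_continuous_on[of L]) (use Fplip L0 in \<open>auto intro!: lipschitz_onI\<close>)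
  define B where "B = norm (F z0) + L * r"
  have Fpb: "norm (Fp z) \<le> B" for z
  proof -
    have "dist (F (P z)) (F z0) \<le> L * dist (P z) z0"
      using lipschitz_onD[OF L Pin] r by simp
    also have "\<dots> \<le> L * r" using Pin[of z] L0 by (simp add: dist_commute mult_left_mono)
    finally show ?thesis unfolding Fp_def B_def using norm_triangle_ineq2[of "F (P z)" "F z0"]
      by (simp add: dist_norm)
  qed
  have B0: "B \<ge> 0" using L0 r by (simp add: B_def)
  define h where "h = min (1 / (8 * (L + 1))) (r / (3 * (B + 1)))"
  have h0: "h > 0" using L0 B0 r by (simp add: h_def)
  have hL: "3 * h * L \<le> 1/2"
  proof -
    have "h * (8 * (L + 1)) \<le> 1" using L0 unfolding h_def
      by (metis min.cobounded1 divide_le_eq mult.commute add_nonneg_pos zero_less_mult_iff zero_less_numeral zero_less_one pos_le_divide_eq)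
    then show ?thesis using L0 h0 by (simp add: algebra_simps; smt (verit) mult_left_mono)
  qed
  have hB: "3 * h * B \<le> r"
  proof -
    have "h * (3 * (B + 1)) \<le> r" using B0 unfolding h_def
      by (metis min.cobounded2 pos_le_divide_eq add_nonneg_pos zero_less_mult_iff zero_less_numeral zero_less_one mult.commute)
    then show ?thesis using B0 h0 by (simp add: algebra_simps; smt (verit) mult_left_mono)
  qed
  define cl where "cl t = max (-h) (min h t)" for t
  have clin: "cl t \<in> {-h..h}" for t using h0 by (auto simp: cl_def)
  have clid: "t \<in> {-h..h} \<Longrightarrow> cl t = t" for t by (auto simp: cl_def)
  have clcont: "continuous_on UNIV cl" unfolding cl_def by (intro continuous_intros)
  define I where "I \<phi> u = integral {-h..u} (\<lambda>s. Fp (apply_bcontfun \<phi> s))" for \<phi> :: "real \<Rightarrow>\<^sub>C 'z" and u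
  have gcont: "continuous_on A (\<lambda>s. Fp (apply_bcontfun \<phi> s))" for \<phi> :: "real \<Rightarrow>\<^sub>C 'z" and A
    by (rule continuous_on_compose2[OF Fpcont]) auto
  have Ider: "(I \<phi> has_vector_derivative Fp (apply_bcontfun \<phi> u)) (at u within {-h..h})"
    if "u \<in> {-h..h}" for \<phi> u
    unfolding I_def using integral_has_vector_derivative[OF gcont that] .
  have Icont: "continuous_on {-h..h} (I \<phi>)" for \<phi>
    using Ider by (meson continuous_on_eq_continuous_within has_vector_derivative_continuous)
  have Ibnd: "norm (I \<phi> u) \<le> B * (u + h)" if "u \<in> {-h..h}" for \<phi> u
    unfolding I_def using int_bound[OF gcont _ B0 Fpb, of "-h" u] that by simp
  define T0 where "T0 \<phi> t = z0 + I \<phi> (cl t) - I \<phi> 0" for \<phi> t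
  have T0bc: "T0 \<phi> \<in> bcontfun" for \<phi>
  proof -
    have c: "continuous_on UNIV (T0 \<phi>)"
      unfolding T0_def
      by (intro continuous_intros continuous_on_compose2[OF Icont clcont]) (use clin in auto)
    have "norm (T0 \<phi> t) \<le> norm z0 + B * (2*h) + B * h" for t
    proof -
      have "norm (I \<phi> (cl t)) \<le> B * (2*h)"
        using Ibnd[OF clin[of t]] clin[of t] B0 by (smt (verit) atLeastAtMost_iff mult_left_mono)
      moreover have "norm (I \<phi> 0) \<le> B * h" using Ibnd[of 0] h0 by simp
      ultimately show ?thesis unfolding T0_def using norm_triangle_ineq4 norm_triangle_ineq
        by (smt (verit))
    qed
    then have "bounded (range (T0 \<phi>))" by (auto simp: bounded_iff)
    with c show ?thesis by (simp add: bcontfun_def)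
  qed
  define T where "T \<phi> = Bcontfun (T0 \<phi>)" for \<phi>
  have Tapp: "apply_bcontfun (T \<phi>) t = T0 \<phi> t" for \<phi> t
    unfolding T_def using Bcontfun_inverse[OF T0bc] by simp
  have contr: "dist (T \<phi>) (T \<psi>) \<le> (1/2) * dist \<phi> \<psi>" for \<phi> \<psi>
  proof (rule dist_bound)
    fix t
    define d where "d = dist \<phi> \<psi>"
    have gd: "norm (Fp (apply_bcontfun \<phi> s) - Fp (apply_bcontfun \<psi> s)) \<le> L * d" for s
      using Fplip[of "apply_bcontfun \<phi> s" "apply_bcontfun \<psi> s"] dist_bounded[of \<phi> s \<psi>] L0
      unfolding d_def dist_norm by (smt (verit) mult_left_mono)
    have Idiff: "norm (I \<phi> u - I \<psi> u) \<le> L * d * (u + h)" if "u \<in> {-h..h}" for u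
    proof -
      have "I \<phi> u - I \<psi> u = integral {-h..u} (\<lambda>s. Fp (apply_bcontfun \<phi> s) - Fp (apply_bcontfun \<psi> s))"
        unfolding I_def
        by (rule integral_diff[symmetric]) (auto intro!: integrable_continuous_real gcont)
      also have "norm \<dots> \<le> L * d * (u + h)"
        using int_bound[of "-h" u "\<lambda>s. Fp (apply_bcontfun \<phi> s) - Fp (apply_bcontfun \<psi> s)" "L * d"] that
          gd L0 continuous_on_diff[OF gcont gcont] by (simp add: d_def)
      finally show ?thesis .
    qed
    have d0: "d \<ge> 0" by (simp add: d_def)
    have a1: "norm (I \<phi> (cl t) - I \<psi> (cl t)) \<le> L * d * (2 * h)"
      using Idiff[OF clin[of t]] clin[of t] L0 d0
      by (smt (verit) atLeastAtMost_iff mult_left_mono zero_le_mult_iff)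
    have a2: "norm (I \<phi> 0 - I \<psi> 0) \<le> L * d * h" using Idiff[of 0] h0 by simp
    have "dist (T \<phi> t) (T \<psi> t) = norm ((I \<phi> (cl t) - I \<psi> (cl t)) - (I \<phi> 0 - I \<psi> 0))"
      unfolding Tapp T0_def dist_norm by (simp add: algebra_simps)
    also have "\<dots> \<le> L * d * (2 * h) + L * d * h" using a1 a2 norm_triangle_ineq4 by (smt (verit))
    also have "\<dots> = (3 * h * L) * d" by (simp add: algebra_simps)
    also have "\<dots> \<le> (1/2) * d" using mult_right_mono[OF hL d0] .
    finally show "dist (T \<phi> t) (T \<psi> t) \<le> (1/2) * dist \<phi> \<psi>" by (simp add: d_def)
  qed
  obtain \<phi> where fixp: "T \<phi> = \<phi>" using banach_fix_type[of "1/2" T] contr by auto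
  define \<gamma> where "\<gamma> = apply_bcontfun \<phi>"
  have \<gamma>eq: "\<gamma> t = z0 + I \<phi> t - I \<phi> 0" if "t \<in> {-h..h}" for t
    using Tapp[of \<phi> t] fixp clid[OF that] unfolding \<gamma>_def T0_def by simp
  have \<gamma>0: "\<gamma> 0 = z0" using \<gamma>eq[of 0] h0 by simp
  have \<gamma>ball: "\<gamma> t \<in> cball z0 r" if "t \<in> {-h..h}" for t
  proof -
    have "norm (I \<phi> t) \<le> B * (2*h)" using Ibnd[OF that] that B0
      by (smt (verit) atLeastAtMost_iff mult_left_mono)
    moreover have "norm (I \<phi> 0) \<le> B * h" using Ibnd[of 0] h0 by simp
    ultimately have "norm (I \<phi> t - I \<phi> 0) \<le> 3 * h * B"
      using norm_triangle_ineq4[of "I \<phi> t" "I \<phi> 0"] by argo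
    then show ?thesis using \<gamma>eq[OF that] hB by (simp add: dist_norm norm_minus_commute)
  qed
  show ?thesis
  proof (intro exI[of _ h] conjI h0 exI[of _ \<gamma>] \<gamma>0 ballI)
    fix t assume t: "t \<in> {-h<..<h}"
    then have t': "t \<in> {-h..h}" by auto
    show "\<gamma> t \<in> cball z0 r" using \<gamma>ball[OF t'] .
    have "(I \<phi> has_vector_derivative Fp (\<gamma> t)) (at t)"
      using Ider[OF t'] at_within_interior[of t "{-h..h}"] t unfolding \<gamma>_def by simp
    then have "((\<lambda>u. z0 + I \<phi> u - I \<phi> 0) has_vector_derivative Fp (\<gamma> t)) (at t)"
      by (auto intro!: derivative_eq_intros)
    then have "(\<gamma> has_vector_derivative Fp (\<gamma> t)) (at t)"
      by (rule has_vector_derivative_transform_within_open[of _ _ _ "{-h<..<h}"])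
         (use t \<gamma>eq in auto)
    moreover have "Fp (\<gamma> t) = F (\<gamma> t)"
      unfolding Fp_def P_def using closest_point_self[OF \<gamma>ball[OF t']] by simp
    ultimately show "(\<gamma> has_vector_derivative F (\<gamma> t)) (at t)" by simp
  qed
qed




definition LIP :: "'a::metric_space set \<Rightarrow> ('a \<Rightarrow> 'b::metric_space) \<Rightarrow> bool" where
  "LIP S f \<longleftrightarrow> (\<exists>L. L-lipschitz_on S f)"

lemma LIP_bounded:
  fixes f :: "'a::metric_space \<Rightarrow> 'b::real_normed_vector"
  assumes "LIP S f" "bounded S"
  shows "\<exists>M\<ge>0. \<forall>z\<in>S. norm (f z) \<le> M"
proof (cases "S = {}")
  case True then show ?thesis by auto
next
  case False
  then obtain z1 where z1: "z1 \<in> S" by auto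
  obtain L where L: "L-lipschitz_on S f" using assms unfolding LIP_def by auto
  have L0: "L \<ge> 0" using L lipschitz_on_nonneg by blast
  obtain x0 e where "\<forall>z\<in>S. dist x0 z \<le> e" using assms(2) unfolding bounded_def by auto
  then have R: "\<forall>z\<in>S. dist z1 z \<le> dist z1 x0 + e" by (smt (verit) dist_triangle)
  define R where "R = dist z1 x0 + e"
  have "norm (f z) \<le> norm (f z1) + L * R" if "z \<in> S" for z
  proof -
    have "dist (f z) (f z1) \<le> L * dist z z1" using lipschitz_onD[OF L that z1] .
    also have "\<dots> \<le> L * R" using R that L0 unfolding R_def by (metis dist_commute mult_left_mono)
    finally show ?thesis using norm_triangle_ineq2[of "f z" "f z1"] by (simp add: dist_norm)
  qed
  moreover have "R \<ge> 0" using R z1 unfolding R_def by (metis dist_self)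
  then have "norm (f z1) + L * R \<ge> 0" using L0 by simp
  ultimately show ?thesis by blast
qed

lemma LIP_mult:
  fixes f g :: "'a::metric_space \<Rightarrow> real"
  assumes "LIP S f" "LIP S g" "bounded S"
  shows "LIP S (\<lambda>z. f z * g z)"
proof -
  obtain Mf where Mf: "Mf \<ge> 0" "\<forall>z\<in>S. norm (f z) \<le> Mf" using LIP_bounded[OF assms(1,3)] by auto
  obtain Mg where Mg: "Mg \<ge> 0" "\<forall>z\<in>S. norm (g z) \<le> Mg" using LIP_bounded[OF assms(2,3)] by auto
  obtain Lf where Lf: "Lf-lipschitz_on S f" using assms unfolding LIP_def by auto
  obtain Lg where Lg: "Lg-lipschitz_on S g" using assms unfolding LIP_def by auto
  have Lf0: "Lf \<ge> 0" using Lf lipschitz_on_nonneg by blast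
  have Lg0: "Lg \<ge> 0" using Lg lipschitz_on_nonneg by blast
  have "(Mf * Lg + Mg * Lf)-lipschitz_on S (\<lambda>z. f z * g z)"
  proof (rule lipschitz_onI)
    fix z w assume zw: "z \<in> S" "w \<in> S"
    have "f z * g z - f w * g w = f z * (g z - g w) + g w * (f z - f w)" by (simp add: algebra_simps)
    then have "\<bar>f z * g z - f w * g w\<bar> \<le> \<bar>f z\<bar> * \<bar>g z - g w\<bar> + \<bar>g w\<bar> * \<bar>f z - f w\<bar>"
      by (metis abs_mult abs_triangle_ineq)
    also have "\<dots> \<le> Mf * (Lg * dist z w) + Mg * (Lf * dist z w)"
    proof (intro add_mono mult_mono)
      show "\<bar>f z\<bar> \<le> Mf" "\<bar>g w\<bar> \<le> Mg" using Mf Mg zw by auto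
      show "\<bar>g z - g w\<bar> \<le> Lg * dist z w" using lipschitz_onD[OF Lg zw] by (simp add: dist_real_def)
      show "\<bar>f z - f w\<bar> \<le> Lf * dist z w" using lipschitz_onD[OF Lf zw] by (simp add: dist_real_def)
    qed (use Mf Mg in auto)
    finally show "dist (f z * g z) (f w * g w) \<le> (Mf * Lg + Mg * Lf) * dist z w"
      by (simp add: dist_real_def algebra_simps)
  qed (use Mf Mg Lf0 Lg0 in auto)
  then show ?thesis unfolding LIP_def by blast
qed

lemma LIP_sum:
  fixes f :: "'i \<Rightarrow> 'a::metric_space \<Rightarrow> 'b::real_normed_vector"
  assumes "finite A" "\<And>a. a \<in> A \<Longrightarrow> LIP S (f a)"
  shows "LIP S (\<lambda>z. \<Sum>a\<in>A. f a z)"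
  using assms
proof (induction A rule: finite_induct)
  case empty
  then show ?case unfolding LIP_def using lipschitz_on_constant by auto
next
  case (insert a A)
  have "LIP S (f a)" "LIP S (\<lambda>z. \<Sum>a\<in>A. f a z)" using insert.IH insert.prems by auto
  then obtain L1 L2 where "L1-lipschitz_on S (f a)" "L2-lipschitz_on S (\<lambda>z. \<Sum>a\<in>A. f a z)"
    unfolding LIP_def by auto
  from lipschitz_on_add[OF this] show ?case using insert unfolding LIP_def by auto
qed

lemma LIP_vec:
  fixes f :: "'n::finite \<Rightarrow> 'a::metric_space \<Rightarrow> real"
  assumes "\<And>c. LIP S (f c)"
  shows "LIP S (\<lambda>z. \<chi> c. f c z)"
proof -
  obtain L where L: "\<And>c. (L c)-lipschitz_on S (f c)" using assms unfolding LIP_def by metis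
  have "(\<Sum>c\<in>UNIV. L c)-lipschitz_on S (\<lambda>z. \<chi> c. f c z)"
  proof (rule lipschitz_onI)
    fix z w assume zw: "z \<in> S" "w \<in> S"
    have "(\<chi> c. f c z) - (\<chi> c. f c w) = ((\<chi> c. f c z - f c w) :: real^'n)"
      by (simp add: vec_eq_iff)
    then have "dist (\<chi> c. f c z) (\<chi> c. f c w) = norm ((\<chi> c. f c z - f c w) :: real^'n)"
      by (simp add: dist_norm)
    also have "\<dots> \<le> (\<Sum>c\<in>UNIV. \<bar>f c z - f c w\<bar>)" using norm_le_l1_cart[of "(\<chi> c. f c z - f c w) :: real^'n"] by simp
    also have "\<dots> \<le> (\<Sum>c\<in>UNIV. L c * dist z w)"
      by (intro sum_mono) (use lipschitz_onD[OF L zw] in \<open>simp add: dist_real_def\<close>)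
    finally show "dist (\<chi> c. f c z) (\<chi> c. f c w) \<le> (\<Sum>c\<in>UNIV. L c) * dist z w"
      by (simp add: sum_distrib_right)
  qed (use L lipschitz_on_nonneg in \<open>meson sum_nonneg\<close>)
  then show ?thesis unfolding LIP_def by blast
qed

lemma LIP_comp:
  assumes "L-lipschitz_on T f" "\<And>z. z \<in> S \<Longrightarrow> g z \<in> T" "\<And>z w. dist (g z) (g w) \<le> dist z w"
  shows "LIP S (\<lambda>z. f (g z))"
proof -
  have L0: "L \<ge> 0" using assms(1) lipschitz_on_nonneg by blast
  have "L-lipschitz_on S (\<lambda>z. f (g z))"
  proof (rule lipschitz_onI[OF _ L0])
    fix z w assume "z \<in> S" "w \<in> S"
    then have "dist (f (g z)) (f (g w)) \<le> L * dist (g z) (g w)" using lipschitz_onD[OF assms(1)] assms(2) by blast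
    also have "\<dots> \<le> L * dist z w" using assms(3) L0 by (simp add: mult_left_mono)
    finally show "dist (f (g z)) (f (g w)) \<le> L * dist z w" .
  qed
  then show ?thesis unfolding LIP_def by blast
qed

lemma smooth_lip:
  fixes f :: "real^'n::finite \<Rightarrow> real"
  assumes "cball y r \<subseteq> U" "open U" "smooth_fun U f"
  shows "\<exists>L. L-lipschitz_on (cball y r) f"
proof -
  define \<psi> where "\<psi> p = (\<Sum>i\<in>UNIV. \<bar>pd i f p\<bar>)" for p
  have pc: "continuous_on (cball y r) (pd i f)" for i
    using smooth_cont[OF smooth_pd[OF assms(3)]] assms(1)
    by (meson continuous_at_imp_continuous_on subsetD)
  have "continuous_on (cball y r) \<psi>" unfolding \<psi>_def by (intro continuous_intros pc)
  then have "bounded (\<psi> ` cball y r)" by (intro compact_imp_bounded compact_continuous_image) auto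
  then obtain M where M: "M > 0" "\<And>p. p \<in> cball y r \<Longrightarrow> norm (\<psi> p) \<le> M"
    unfolding bounded_pos by auto
  have der: "(f has_derivative frechet_derivative f (at p)) (at p within cball y r)" if "p \<in> cball y r" for p
    using pd_works[OF smooth_diff[OF assms(3)]] assms(1) that has_derivative_at_withinI by blast
  have on: "onorm (frechet_derivative f (at p)) \<le> M" if p: "p \<in> cball y r" for p
  proof (rule onorm_le)
    fix hh :: "real^'n"
    define D where "D = frechet_derivative f (at p)"
    have lin: "linear D" using pd_works[OF smooth_diff[OF assms(3)]] assms(1) p has_derivative_linear
      unfolding D_def by blast
    have "D hh = D (\<Sum>i\<in>UNIV. hh $ i *\<^sub>R axis i 1)" by (simp add: basis_expansion scalar_mult_eq_scaleR[symmetric])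
    also have "\<dots> = (\<Sum>i\<in>UNIV. hh $ i * D (axis i 1))"
      by (simp add: linear_sum[OF lin] linear_scale[OF lin])
    also have "\<dots> = (\<Sum>i\<in>UNIV. hh $ i * pd i f p)"
      by (simp add: pd_def D_def)
    finally have "\<bar>D hh\<bar> \<le> (\<Sum>i\<in>UNIV. \<bar>hh $ i\<bar> * \<bar>pd i f p\<bar>)"
      by (metis (no_types, lifting) abs_mult sum_abs sum.cong)
    also have "\<dots> \<le> (\<Sum>i\<in>UNIV. norm hh * \<bar>pd i f p\<bar>)"
      by (intro sum_mono mult_right_mono component_le_norm_cart) auto
    also have "\<dots> = norm hh * \<psi> p" by (simp add: \<psi>_def sum_distrib_left)
    also have "\<dots> \<le> M * norm hh" using M(2)[OF p]
      by (metis mult.commute mult_left_mono norm_ge_zero real_norm_def abs_le_D1 order_trans)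
    finally show "norm (frechet_derivative f (at p) hh) \<le> M * norm hh" by (simp add: D_def)
  qed
  have "M-lipschitz_on (cball y r) f"
  proof (rule lipschitz_onI)
    fix z w assume "z \<in> cball y r" "w \<in> cball y r"
    from differentiable_bound[OF convex_cball der on this]
    show "dist (f z) (f w) \<le> M * dist z w" by (simp add: dist_norm)
  qed (use M in auto)
  then show ?thesis by blast
qed




lemma LIP_neg: "LIP S f \<Longrightarrow> LIP S (\<lambda>z. - (f z :: real))"
  unfolding LIP_def using lipschitz_on_minus by blast

lemma vd_fst: "(f has_vector_derivative D) F \<Longrightarrow> ((\<lambda>t. fst (f t)) has_vector_derivative fst D) F"
  unfolding has_vector_derivative_def using has_derivative_fst by fastforce

lemma vd_snd: "(f has_vector_derivative D) F \<Longrightarrow> ((\<lambda>t. snd (f t)) has_vector_derivative snd D) F"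
  unfolding has_vector_derivative_def using has_derivative_snd by fastforce

lemma geod_prop:
  fixes G G' :: "'n::finite christoffel" and y v :: "real^'n"
  assumes U: "open U" "y \<in> U" and Gs: "\<And>a b c. smooth_fun U (\<lambda>p. G p a b c)"
    and pe: "proj_equiv U G G'"
  shows "\<exists>lam. \<forall>c. (\<Sum>a\<in>UNIV. \<Sum>b\<in>UNIV. (G' y a b c - G y a b c) * v$a * v$b) = lam * v$c"
proof (cases "v = 0")
  case True then show ?thesis by (intro exI[of _ 0]) simp
next
  case False
  obtain r0 where r0: "r0 > 0" "cball y r0 \<subseteq> U" using U open_contains_cball by blast
  define r where "r = min r0 (norm v / 2)"
  have nv: "norm v > 0" using False by simp
  have "r \<le> norm v / 2" by (simp add: r_def)
  then have r3: "r < norm v" using nv by linarith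
  have r: "r > 0" "cball y r \<subseteq> U" "r < norm v" using r0 nv r3 by (auto simp: r_def)
  define \<Phi> where "\<Phi> p q = (\<chi> c. - (\<Sum>a\<in>UNIV. \<Sum>b\<in>UNIV. G p a b c * q$a * q$b))" for p q :: "real^'n"
  define F where "F z = (snd z, \<Phi> (fst z) (snd z))" for z :: "(real^'n) \<times> (real^'n)"
  define z0 where "z0 = (y, v)"
  have fstin: "fst z \<in> cball y r" if "z \<in> cball z0 r" for z
    using that dist_fst_le[of z0 z] by (simp add: z0_def)
  have bd: "bounded (cball z0 r)" by simp
  have LG: "LIP (cball z0 r) (\<lambda>z. G (fst z) a b c)" for a b c
  proof -
    obtain L where "L-lipschitz_on (cball y r) (\<lambda>p. G p a b c)"
      using smooth_lip[OF r(2) U(1) Gs] by blast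
    then show ?thesis by (rule LIP_comp) (use fstin dist_fst_le in auto)
  qed
  have Lq: "LIP (cball z0 r) (\<lambda>z. snd z $ a)" for a
  proof -
    have "1-lipschitz_on (cball z0 r) (\<lambda>z. snd z $ a)"
    proof (rule lipschitz_onI)
      fix z w :: "(real^'n) \<times> (real^'n)"
      have "dist (snd z $ a) (snd w $ a) \<le> dist (snd z) (snd w)"
        using component_le_norm_cart[of "snd z - snd w" a] by (simp add: dist_norm dist_real_def)
      then show "dist (snd z $ a) (snd w $ a) \<le> 1 * dist z w" using dist_snd_le[of z w] by simp
    qed simp
    then show ?thesis unfolding LIP_def by blast
  qed
  have L\<Phi>: "LIP (cball z0 r) (\<lambda>z. \<Phi> (fst z) (snd z))"
    unfolding \<Phi>_def
    by (intro LIP_vec LIP_neg LIP_sum LIP_mult LG Lq bd finite)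
  have Lsnd: "LIP (cball z0 r) snd"
    unfolding LIP_def by (intro exI[of _ 1] lipschitz_onI) (use dist_snd_le in auto)
  obtain L where "L-lipschitz_on (cball z0 r) F"
  proof -
    obtain L1 L2 where "L1-lipschitz_on (cball z0 r) snd" "L2-lipschitz_on (cball z0 r) (\<lambda>z. \<Phi> (fst z) (snd z))"
      using Lsnd L\<Phi> unfolding LIP_def by auto
    from lipschitz_on_Pair[OF this] show ?thesis using that unfolding F_def by blast
  qed
  from ode_exists[OF this r(1)] obtain h \<phi> where h: "h > 0" "\<phi> 0 = z0"
    "\<And>t. t \<in> {-h<..<h} \<Longrightarrow> \<phi> t \<in> cball z0 r \<and> (\<phi> has_vector_derivative F (\<phi> t)) (at t)"
    by metis
  define \<gamma> where "\<gamma> t = fst (\<phi> t)" for t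
  define \<gamma>1 where "\<gamma>1 t = snd (\<phi> t)" for t
  define \<gamma>2 where "\<gamma>2 t = \<Phi> (\<gamma> t) (\<gamma>1 t)" for t
  have d1: "(\<gamma> has_vector_derivative \<gamma>1 t) (at t)" if "t \<in> {-h<..<h}" for t
    using vd_fst[OF conjunct2[OF h(3)[OF that]]] unfolding \<gamma>_def \<gamma>1_def F_def by simp
  have d2: "(\<gamma>1 has_vector_derivative \<gamma>2 t) (at t)" if "t \<in> {-h<..<h}" for t
    using vd_snd[OF conjunct2[OF h(3)[OF that]]] unfolding \<gamma>2_def \<gamma>_def \<gamma>1_def F_def by simp
  have inU: "\<gamma> t \<in> U" if "t \<in> {-h<..<h}" for t
    using fstin[OF conjunct1[OF h(3)[OF that]]] r(2) unfolding \<gamma>_def by blast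
  have nz: "\<gamma>1 t \<noteq> 0" if "t \<in> {-h<..<h}" for t
  proof
    assume "\<gamma>1 t = 0"
    then have "dist v 0 \<le> r" using dist_snd_le[of z0 "\<phi> t"] conjunct1[OF h(3)[OF that]]
      unfolding \<gamma>1_def z0_def by simp
    then show False using r(3) by simp
  qed
  have "pregeodesic U G {-h<..<h} \<gamma>"
    unfolding pregeodesic_def
    by (intro exI[of _ \<gamma>1] exI[of _ \<gamma>2] exI[of _ "\<lambda>t. 0"] ballI conjI allI d1 d2 inU nz)
       (simp_all add: \<gamma>2_def \<Phi>_def)
  then have "pregeodesic U G' {-h<..<h} \<gamma>" using pe h(1) unfolding proj_equiv_def by auto
  then obtain g1 g2 f1 where g0: "\<forall>t\<in>{-h<..<h}. \<gamma> t \<in> U \<and>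
        (\<gamma> has_vector_derivative g1 t) (at t) \<and>
        (g1 has_vector_derivative g2 t) (at t) \<and>
        g1 t \<noteq> 0 \<and>
        (\<forall>c. g2 t $ c + (\<Sum>a\<in>UNIV. \<Sum>b\<in>UNIV. G' (\<gamma> t) a b c * g1 t $ a * g1 t $ b)
              = f1 t * g1 t $ c)"
    unfolding pregeodesic_def by (elim exE) (erule that)
  note g = bspec[OF g0]
  have z: "(0::real) \<in> {-h<..<h}" using h by simp
  have g1eq: "g1 t = \<gamma>1 t" if "t \<in> {-h<..<h}" for t
    using vector_derivative_unique_at[OF conjunct1[OF conjunct2[OF g[OF that]]] d1[OF that]] .
  have "(\<gamma>1 has_vector_derivative g2 0) (at 0)"
    by (rule has_vector_derivative_transform_within_open[of g1 _ _ "{-h<..<h}"])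
       (use g[OF z] g1eq z in auto)
  then have g2eq: "g2 0 = \<gamma>2 0" using vector_derivative_unique_at d2[OF z] by blast
  have \<gamma>0: "\<gamma> 0 = y" "\<gamma>1 0 = v" using h(2) by (simp_all add: \<gamma>_def \<gamma>1_def z0_def)
  show ?thesis
  proof (intro exI[of _ "f1 0"] allI)
    fix c
    have e: "g2 0 $ c + (\<Sum>a\<in>UNIV. \<Sum>b\<in>UNIV. G' y a b c * v $ a * v $ b) = f1 0 * v $ c"
      using conjunct2[OF conjunct2[OF conjunct2[OF conjunct2[OF g[OF z]]]]] g1eq[OF z] \<gamma>0 by simp
    have "g2 0 $ c = - (\<Sum>a\<in>UNIV. \<Sum>b\<in>UNIV. G y a b c * v$a * v$b)"
      using g2eq \<gamma>0 by (simp add: \<gamma>2_def \<Phi>_def)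
    with e show "(\<Sum>a\<in>UNIV. \<Sum>b\<in>UNIV. (G' y a b c - G y a b c) * v$a * v$b) = f1 0 * v$c"
      by (simp add: left_diff_distrib sum_subtractf)
  qed
qed




lemma polar3:
  fixes \<tau> :: "'n::finite \<Rightarrow> 'n \<Rightarrow> 'n \<Rightarrow> real"
  defines "Cf \<equiv> \<lambda>v::real^'n. \<Sum>a\<in>UNIV. \<Sum>b\<in>UNIV. \<Sum>d\<in>UNIV. \<tau> a b d * v$a * v$b * v$d"
  shows "Cf (x+y+z) - Cf (x+y) - Cf (x+z) - Cf (y+z) + Cf x + Cf y + Cf z =
    (\<Sum>a\<in>UNIV. \<Sum>b\<in>UNIV. \<Sum>d\<in>UNIV. \<tau> a b d * (x$a*y$b*z$d + x$a*z$b*y$d + y$a*x$b*z$d + y$a*z$b*x$d + z$a*x$b*y$d + z$a*y$b*x$d))"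
  unfolding Cf_def
  by (simp add: sum_subtractf[symmetric] sum.distrib[symmetric] algebra_simps)

lemma axis_sum3:
  fixes \<tau> :: "'n::finite \<Rightarrow> 'n \<Rightarrow> 'n \<Rightarrow> real"
  shows "(\<Sum>a\<in>UNIV. \<Sum>b\<in>UNIV. \<Sum>d\<in>UNIV. \<tau> a b d * ((axis i 1 :: real^'n)$a * (axis j 1 :: real^'n)$b * (axis l 1 :: real^'n)$d)) = \<tau> i j l"
  by (simp add: axis_def ifz cong: if_cong)




lemma quad_prop:
  fixes S :: "'n::finite \<Rightarrow> 'n \<Rightarrow> 'n \<Rightarrow> real"
  assumes sym: "\<And>a b c. S a b c = S b a c"
    and qp: "\<And>v::real^'n. \<exists>lam. \<forall>c. (\<Sum>a\<in>UNIV. \<Sum>b\<in>UNIV. S a b c * v$a * v$b) = lam * v$c"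
  shows "S a b c = kdelta c a * ((\<Sum>l\<in>UNIV. S b l l) / (real CARD('n) + 1))
                 + kdelta c b * ((\<Sum>l\<in>UNIV. S a l l) / (real CARD('n) + 1))"
proof -
  define \<tau> where "\<tau> c e a b d = S a b c * kdelta e d - S a b e * kdelta c d" for c e a b d
  have cub: "(\<Sum>a\<in>UNIV. \<Sum>b\<in>UNIV. \<Sum>d\<in>UNIV. \<tau> c e a b d * v$a * v$b * v$d) =
      (\<Sum>a\<in>UNIV. \<Sum>b\<in>UNIV. S a b c * v$a * v$b) * v$e - (\<Sum>a\<in>UNIV. \<Sum>b\<in>UNIV. S a b e * v$a * v$b) * v$c"
    for c e and v :: "real^'n"
    by (simp add: \<tau>_def kdelta_def ifz left_diff_distrib sum_subtractf sum_distrib_right mult.assoc cong: if_cong)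
  have cub0: "(\<Sum>a\<in>UNIV. \<Sum>b\<in>UNIV. \<Sum>d\<in>UNIV. \<tau> c e a b d * v$a * v$b * v$d) = 0"
    for c e and v :: "real^'n"
  proof -
    obtain lam where "\<forall>c. (\<Sum>a\<in>UNIV. \<Sum>b\<in>UNIV. S a b c * v$a * v$b) = lam * v$c" using qp by blast
    then show ?thesis unfolding cub by simp
  qed
  have perm0: "\<tau> c e i j l + \<tau> c e i l j + \<tau> c e j i l + \<tau> c e j l i + \<tau> c e l i j + \<tau> c e l j i = 0"
    for c e i j l
  proof -
    have "0 = (\<Sum>a\<in>UNIV. \<Sum>b\<in>UNIV. \<Sum>d\<in>UNIV. \<tau> c e a b d * ((axis i 1 :: real^'n)$a*(axis j 1 :: real^'n)$b*(axis l 1 :: real^'n)$d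
       + (axis i 1 :: real^'n)$a*(axis l 1 :: real^'n)$b*(axis j 1 :: real^'n)$d
       + (axis j 1 :: real^'n)$a*(axis i 1 :: real^'n)$b*(axis l 1 :: real^'n)$d
       + (axis j 1 :: real^'n)$a*(axis l 1 :: real^'n)$b*(axis i 1 :: real^'n)$d
       + (axis l 1 :: real^'n)$a*(axis i 1 :: real^'n)$b*(axis j 1 :: real^'n)$d
       + (axis l 1 :: real^'n)$a*(axis j 1 :: real^'n)$b*(axis i 1 :: real^'n)$d))"
      using polar3[of "\<tau> c e" "axis i 1" "axis j 1" "axis l 1", unfolded cub0] by simp
    also have "\<dots> = \<tau> c e i j l + \<tau> c e i l j + \<tau> c e j i l + \<tau> c e j l i + \<tau> c e l i j + \<tau> c e l j i"
      by (simp add: distrib_left sum.distrib axis_sum3)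
    finally show ?thesis by simp
  qed
  define N where "N = real CARD('n)"
  define T where "T a = (\<Sum>l\<in>UNIV. S a l l)" for a
  have T': "(\<Sum>l\<in>UNIV. S l a l) = T a" for a unfolding T_def using sym by simp
  have s1: "(\<Sum>l\<in>UNIV. \<tau> c l a b l) = N * S a b c - S a b c" for a b
    by (simp add: \<tau>_def kdelta_def sum_subtractf N_def ifz cong: if_cong)
  have s2: "(\<Sum>l\<in>UNIV. \<tau> c l a l b) = S a b c - kdelta c b * T a" for a b
    by (simp add: \<tau>_def kdelta_def sum_subtractf T_def sum_distrib_left ifz cong: if_cong)
  have s5: "(\<Sum>l\<in>UNIV. \<tau> c l l a b) = S b a c - kdelta c b * T a" for a b
    using T'[of a] by (simp add: \<tau>_def kdelta_def sum_subtractf sum_distrib_left ifz cong: if_cong)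
  have "0 = (\<Sum>l\<in>UNIV. \<tau> c l a b l + \<tau> c l a l b + \<tau> c l b a l + \<tau> c l b l a + \<tau> c l l a b + \<tau> c l l b a)"
    using perm0 by simp
  also have "\<dots> = 2 * (N + 1) * S a b c - 2 * kdelta c a * T b - 2 * kdelta c b * T a"
    using sym[of b a c] s1[of a b] s1[of b a] s2[of a b] s2[of b a] s5[of a b] s5[of b a]
    by (simp add: sum.distrib algebra_simps)
  finally have "(N + 1) * S a b c = kdelta c a * T b + kdelta c b * T a" by (simp add: algebra_simps)
  moreover have "N + 1 > 0" by (simp add: N_def)
  ultimately have "S a b c = (kdelta c a * T b + kdelta c b * T a) / (N + 1)"
    by (metis nonzero_mult_div_cancel_left less_irrefl)
  then show ?thesis unfolding N_def[symmetric] T_def[symmetric] by (simp add: add_divide_distrib)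
qed




lemma weyl_inv:
  fixes G G' :: "'n::finite christoffel"
  assumes symG: "\<And>a b c. G x a b c = G x b a c"
    and rel: "\<And>a b c. G' x a b c = G x a b c + kdelta c a * u b + kdelta c b * u a"
    and drel: "\<And>e a b c. pd e (\<lambda>y. G' y a b c) x = pd e (\<lambda>y. G y a b c) x + kdelta c a * Du e b + kdelta c b * Du e a"
    and card: "CARD('n) \<ge> 2"
  shows "proj_weyl G' x a b c d = proj_weyl G x a b c d"
proof -
  define \<mu> where "\<mu> b d = Du b d - (\<Sum>e\<in>UNIV. u e * G x b d e) - u b * u d" for b d
  have curv': "curv G' x a b c d = curv G x a b c d - kdelta c a * \<mu> b d + kdelta c b * \<mu> a d
      + kdelta c d * (Du a b - Du b a)" for a b c d
    unfolding curv_def rel drel \<mu>_def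
    using symG[of a b] symG[of a d] symG[of b d]
    by (simp add: kdelta_def ifz distrib_left distrib_right sum.distrib sum_subtractf sum_distrib_left cong: if_cong)
  define N where "N = real CARD('n)"
  have ric': "ricci G' x b d = ricci G x b d - (N - 1) * \<mu> b d + Du d b - Du b d" for b d
    unfolding ricci_def curv'
    by (simp only: right_diff_distrib sum.distrib sum_subtractf) (simp add: kdelta_def ifz N_def algebra_simps cong: if_cong)
  have musym: "\<mu> a b - \<mu> b a = Du a b - Du b a" for a b
    unfolding \<mu>_def using symG[of a b] by simp
  have N2: "N \<ge> 2" using card by (simp add: N_def)
  have sch': "schouten G' x a b = schouten G x a b - \<mu> a b" for a b
  proof -
    have nz: "(N - 1) * (N - 1 + 2) \<noteq> 0" using N2 by simp
    have "(N - 1 + 1) * ricci G' x a b + ricci G' x b a =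
          ((N - 1 + 1) * ricci G x a b + ricci G x b a) - ((N - 1) * (N - 1 + 2)) * \<mu> a b"
    proof -
      have mba: "\<mu> b a = \<mu> a b - Du a b + Du b a" using musym[of a b] by simp
      show ?thesis unfolding ric' mba by (simp add: algebra_simps)
    qed
    then show ?thesis unfolding schouten_def Let_def N_def[symmetric]
      using nz by (simp add: diff_divide_distrib)
  qed
  show ?thesis
  proof -
    have mba: "\<mu> b a = \<mu> a b - Du a b + Du b a" using musym[of a b] by simp
    show ?thesis unfolding proj_weyl_def sch' curv' mba by (simp add: algebra_simps)
  qed
qed




lemma trace_zero:
  fixes M gg :: "'n::finite \<Rightarrow> 'n \<Rightarrow> real"
  assumes det: "det (\<chi> i j. gg i j) \<noteq> 0"
    and h: "\<And>c d. (\<Sum>e\<in>UNIV. M e c * gg e d) + (\<Sum>e\<in>UNIV. M e d * gg c e) = 0"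
  shows "(\<Sum>c\<in>UNIV. M c c) = 0"
proof -
  define A :: "real^'n^'n" where "A = (\<chi> i j. gg i j)"
  define B :: "real^'n^'n" where "B = (\<chi> i j. M i j)"
  have "invertible A" unfolding A_def using det invertible_det_nz by blast
  then obtain A' where A': "A ** A' = mat 1" "A' ** A = mat 1" unfolding invertible_def by blast
  have AB: "A ** B = - (transpose B ** A)"
  proof -
    have "(A ** B) $ c $ d = - ((transpose B ** A) $ c $ d)" for c d
    proof -
      have 1: "(A ** B) $ c $ d = (\<Sum>e\<in>UNIV. M e d * gg c e)"
        unfolding A_def B_def matrix_matrix_mult_def by (simp add: mult.commute)
      have 2: "(transpose B ** A) $ c $ d = (\<Sum>e\<in>UNIV. M e c * gg e d)"
        unfolding A_def B_def matrix_matrix_mult_def transpose_def by simp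
      show ?thesis unfolding 1 2 using h[of c d] by linarith
    qed
    then show ?thesis by (simp add: vec_eq_iff)
  qed
  have "trace B = trace ((A' ** A) ** B)" using A' by simp
  also have "\<dots> = trace (A' ** (A ** B))" by (simp add: matrix_mul_assoc)
  also have "\<dots> = - trace (A' ** (transpose B ** A))"
    unfolding AB by (simp add: matrix_matrix_mult_def trace_def sum_negf)
  also have "\<dots> = - trace ((A' ** transpose B) ** A)" by (simp add: matrix_mul_assoc)
  also have "\<dots> = - trace (A ** (A' ** transpose B))" using trace_mul_sym[of "A' ** transpose B" A] by simp
  also have "\<dots> = - trace (transpose B)" using A' by (simp add: matrix_mul_assoc)
  also have "\<dots> = - trace B" by (simp add: trace_def transpose_def)
  finally have "trace B = 0" by simp
  then show ?thesis by (simp add: trace_def B_def)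
qed

lemma claimC_alg:
  fixes \<Gamma> :: "'n::finite \<Rightarrow> 'n \<Rightarrow> 'n \<Rightarrow> real" and D :: "'n \<Rightarrow> 'n \<Rightarrow> 'n \<Rightarrow> 'n \<Rightarrow> real"
    and gg :: "'n \<Rightarrow> 'n \<Rightarrow> real" and dg :: "'n \<Rightarrow> 'n \<Rightarrow> 'n \<Rightarrow> real"
  assumes \<Gamma>sym: "\<And>a b c. \<Gamma> a b c = \<Gamma> b a c" and gsym: "\<And>i j. gg i j = gg j i"
    and dg: "\<And>a e d. dg a e d = (\<Sum>f\<in>UNIV. \<Gamma> a e f * gg f d) + (\<Sum>f\<in>UNIV. \<Gamma> a d f * gg e f)"
    and E: "(\<Sum>e\<in>UNIV. \<Gamma> b c e * dg a e d + D a b c e * gg e d) + (\<Sum>e\<in>UNIV. \<Gamma> b d e * dg a c e + D a b d e * gg c e)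
          = (\<Sum>e\<in>UNIV. \<Gamma> a c e * dg b e d + D b a c e * gg e d) + (\<Sum>e\<in>UNIV. \<Gamma> a d e * dg b c e + D b a d e * gg c e)"
  shows "(\<Sum>e\<in>UNIV. (D a b c e - D b a c e + (\<Sum>f\<in>UNIV. \<Gamma> a f e * \<Gamma> b c f) - (\<Sum>f\<in>UNIV. \<Gamma> b f e * \<Gamma> a c f)) * gg e d)
       + (\<Sum>e\<in>UNIV. (D a b d e - D b a d e + (\<Sum>f\<in>UNIV. \<Gamma> a f e * \<Gamma> b d f) - (\<Sum>f\<in>UNIV. \<Gamma> b f e * \<Gamma> a d f)) * gg c e) = 0"
proof -
  define X where "X e f = (\<Gamma> a f e * \<Gamma> b c f * gg e d - \<Gamma> b f e * \<Gamma> a c f * gg e d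
       + \<Gamma> a f e * \<Gamma> b d f * gg c e - \<Gamma> b f e * \<Gamma> a d f * gg c e)
     - (\<Gamma> b c e * \<Gamma> a e f * gg f d + \<Gamma> b c e * \<Gamma> a d f * gg e f
        - \<Gamma> a c e * \<Gamma> b e f * gg f d - \<Gamma> a c e * \<Gamma> b d f * gg e f
        + \<Gamma> b d e * \<Gamma> a c f * gg f e + \<Gamma> b d e * \<Gamma> a e f * gg c f
        - \<Gamma> a d e * \<Gamma> b c f * gg f e - \<Gamma> a d e * \<Gamma> b e f * gg c f)" for e f
  have Xanti: "X e f + X f e = 0" for e f
    unfolding X_def using gsym[of e f] by (simp add: algebra_simps)
  have X0: "(\<Sum>e\<in>UNIV. \<Sum>f\<in>UNIV. X e f) = 0"
  proof -
    have "(\<Sum>e\<in>UNIV. \<Sum>f\<in>UNIV. X e f) = (\<Sum>e\<in>UNIV. \<Sum>f\<in>UNIV. X f e)" by (rule sum.swap)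
    also have "\<dots> = - (\<Sum>e\<in>UNIV. \<Sum>f\<in>UNIV. X e f)"
      unfolding sum_negf[symmetric]
      by (rule sum.cong[OF refl])+ (metis Xanti add.commute add_eq_0_iff)
    finally show ?thesis by simp
  qed
  have i1: "(\<Sum>e\<in>UNIV. (D a b c e - D b a c e + (\<Sum>f\<in>UNIV. \<Gamma> a f e * \<Gamma> b c f) - (\<Sum>f\<in>UNIV. \<Gamma> b f e * \<Gamma> a c f)) * gg e d)
     = (\<Sum>e\<in>UNIV. D a b c e * gg e d) - (\<Sum>e\<in>UNIV. D b a c e * gg e d)
       + (\<Sum>e\<in>UNIV. \<Sum>f\<in>UNIV. \<Gamma> a f e * \<Gamma> b c f * gg e d) - (\<Sum>e\<in>UNIV. \<Sum>f\<in>UNIV. \<Gamma> b f e * \<Gamma> a c f * gg e d)"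
    by (simp add: left_diff_distrib distrib_right sum.distrib sum_subtractf sum_distrib_right)
  have i2: "(\<Sum>e\<in>UNIV. (D a b d e - D b a d e + (\<Sum>f\<in>UNIV. \<Gamma> a f e * \<Gamma> b d f) - (\<Sum>f\<in>UNIV. \<Gamma> b f e * \<Gamma> a d f)) * gg c e)
     = (\<Sum>e\<in>UNIV. D a b d e * gg c e) - (\<Sum>e\<in>UNIV. D b a d e * gg c e)
       + (\<Sum>e\<in>UNIV. \<Sum>f\<in>UNIV. \<Gamma> a f e * \<Gamma> b d f * gg c e) - (\<Sum>e\<in>UNIV. \<Sum>f\<in>UNIV. \<Gamma> b f e * \<Gamma> a d f * gg c e)"
    by (simp add: left_diff_distrib distrib_right sum.distrib sum_subtractf sum_distrib_right)
  have e1: "(\<Sum>e\<in>UNIV. \<Gamma> b c e * dg a e d + D a b c e * gg e d) = (\<Sum>e\<in>UNIV. \<Sum>f\<in>UNIV. \<Gamma> b c e * \<Gamma> a e f * gg f d)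
     + (\<Sum>e\<in>UNIV. \<Sum>f\<in>UNIV. \<Gamma> b c e * \<Gamma> a d f * gg e f) + (\<Sum>e\<in>UNIV. D a b c e * gg e d)"
    by (simp add: dg distrib_left sum.distrib sum_distrib_left mult.assoc)
  have e2: "(\<Sum>e\<in>UNIV. \<Gamma> b d e * dg a c e + D a b d e * gg c e) = (\<Sum>e\<in>UNIV. \<Sum>f\<in>UNIV. \<Gamma> b d e * \<Gamma> a c f * gg f e)
     + (\<Sum>e\<in>UNIV. \<Sum>f\<in>UNIV. \<Gamma> b d e * \<Gamma> a e f * gg c f) + (\<Sum>e\<in>UNIV. D a b d e * gg c e)"
    by (simp add: dg distrib_left sum.distrib sum_distrib_left mult.assoc)
  have e3: "(\<Sum>e\<in>UNIV. \<Gamma> a c e * dg b e d + D b a c e * gg e d) = (\<Sum>e\<in>UNIV. \<Sum>f\<in>UNIV. \<Gamma> a c e * \<Gamma> b e f * gg f d)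
     + (\<Sum>e\<in>UNIV. \<Sum>f\<in>UNIV. \<Gamma> a c e * \<Gamma> b d f * gg e f) + (\<Sum>e\<in>UNIV. D b a c e * gg e d)"
    by (simp add: dg distrib_left sum.distrib sum_distrib_left mult.assoc)
  have e4: "(\<Sum>e\<in>UNIV. \<Gamma> a d e * dg b c e + D b a d e * gg c e) = (\<Sum>e\<in>UNIV. \<Sum>f\<in>UNIV. \<Gamma> a d e * \<Gamma> b c f * gg f e)
     + (\<Sum>e\<in>UNIV. \<Sum>f\<in>UNIV. \<Gamma> a d e * \<Gamma> b e f * gg c f) + (\<Sum>e\<in>UNIV. D b a d e * gg c e)"
    by (simp add: dg distrib_left sum.distrib sum_distrib_left mult.assoc)
  have xs: "(\<Sum>e\<in>UNIV. \<Sum>f\<in>UNIV. X e f) =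
     ((\<Sum>e\<in>UNIV. \<Sum>f\<in>UNIV. \<Gamma> a f e * \<Gamma> b c f * gg e d) - (\<Sum>e\<in>UNIV. \<Sum>f\<in>UNIV. \<Gamma> b f e * \<Gamma> a c f * gg e d)
     + (\<Sum>e\<in>UNIV. \<Sum>f\<in>UNIV. \<Gamma> a f e * \<Gamma> b d f * gg c e) - (\<Sum>e\<in>UNIV. \<Sum>f\<in>UNIV. \<Gamma> b f e * \<Gamma> a d f * gg c e))
     - ((\<Sum>e\<in>UNIV. \<Sum>f\<in>UNIV. \<Gamma> b c e * \<Gamma> a e f * gg f d) + (\<Sum>e\<in>UNIV. \<Sum>f\<in>UNIV. \<Gamma> b c e * \<Gamma> a d f * gg e f)
      - (\<Sum>e\<in>UNIV. \<Sum>f\<in>UNIV. \<Gamma> a c e * \<Gamma> b e f * gg f d) - (\<Sum>e\<in>UNIV. \<Sum>f\<in>UNIV. \<Gamma> a c e * \<Gamma> b d f * gg e f)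
      + (\<Sum>e\<in>UNIV. \<Sum>f\<in>UNIV. \<Gamma> b d e * \<Gamma> a c f * gg f e) + (\<Sum>e\<in>UNIV. \<Sum>f\<in>UNIV. \<Gamma> b d e * \<Gamma> a e f * gg c f)
      - (\<Sum>e\<in>UNIV. \<Sum>f\<in>UNIV. \<Gamma> a d e * \<Gamma> b c f * gg f e) - (\<Sum>e\<in>UNIV. \<Sum>f\<in>UNIV. \<Gamma> a d e * \<Gamma> b e f * gg c f))"
    unfolding X_def by (simp only: sum.distrib sum_subtractf)
  show ?thesis using i1 i2 e1 e2 e3 e4 xs E X0 by linarith
qed




lemma sasaki_weyl_k:
  fixes g :: "real^'n::finite \<Rightarrow> 'n \<Rightarrow> 'n \<Rightarrow> real" and k :: "real^'n \<Rightarrow> real^'n"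
    and G' :: "'n christoffel"
  assumes U: "open U" "x \<in> U" and sas: "sasaki U g k G'"
    and dG: "\<And>a b c. (\<lambda>y. G' y a b c) differentiable (at x)"
    and card: "CARD('n) \<ge> 2"
  shows "(\<Sum>d\<in>UNIV. proj_weyl G' x a b c d * k x $ d) = 0"
proof -
  have gs: "\<And>a b. smooth_fun U (\<lambda>y. g y a b)" and gsym: "\<And>a b. g x a b = g x b a"
    and det: "det (\<chi> i j. g x i j) \<noteq> 0"
    using sas U unfolding sasaki_def pseudo_metric_def by auto
  have Gsym: "\<And>y a b c. y \<in> U \<Longrightarrow> G' y a b c = G' y b a c"
    and LC: "\<And>y a b c. y \<in> U \<Longrightarrow> pd a (\<lambda>y. g y b c) y
        = (\<Sum>d\<in>UNIV. G' y a b d * g y d c) + (\<Sum>d\<in>UNIV. G' y a c d * g y b d)"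
    using sas unfolding sasaki_def levi_civita_def by (auto simp: algebra_simps)
  have ks: "\<And>c. smooth_fun U (\<lambda>y. k y $ c)" using sas unfolding sasaki_def by auto
  have cov2eq: "\<And>a b c. cov2_vec G' k x a b c = - g x a b * k x $ c + kdelta c a * (\<Sum>d\<in>UNIV. g x b d * k x $ d)"
    using sas U unfolding sasaki_def by auto
  have Gx: "G' x a b c = G' x b a c" for a b c using Gsym U by blast
  have DGsym: "pd e (\<lambda>y. G' y a b c) x = pd e (\<lambda>y. G' y b a c) x" for e a b c
    by (rule pd_cong_open[OF U]) (use Gsym in auto)
  have gd: "(\<lambda>y. g y a b) differentiable (at x)" for a b using smooth_diff[OF gs U(2)] .
  have Eeq: "(\<Sum>e\<in>UNIV. G' x b c e * pd a (\<lambda>y. g y e d) x + pd a (\<lambda>y. G' y b c e) x * g x e d)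
       + (\<Sum>e\<in>UNIV. G' x b d e * pd a (\<lambda>y. g y c e) x + pd a (\<lambda>y. G' y b d e) x * g x c e)
       = pd a (pd b (\<lambda>y. g y c d)) x" for a b c d
  proof -
    have "pd a (pd b (\<lambda>y. g y c d)) x
       = pd a (\<lambda>y. (\<Sum>e\<in>UNIV. G' y b c e * g y e d) + (\<Sum>e\<in>UNIV. G' y b d e * g y c e)) x"
      by (rule pd_cong_open[OF U]) (use LC in auto)
    also have "\<dots> = (\<Sum>e\<in>UNIV. G' x b c e * pd a (\<lambda>y. g y e d) x + pd a (\<lambda>y. G' y b c e) x * g x e d)
       + (\<Sum>e\<in>UNIV. G' x b d e * pd a (\<lambda>y. g y c e) x + pd a (\<lambda>y. G' y b d e) x * g x c e)"
      by (simp add: pd_add pd_sum pd_mult dG gd)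
    finally show ?thesis by simp
  qed
  have C: "(\<Sum>e\<in>UNIV. curv G' x a b e c * g x e d) + (\<Sum>e\<in>UNIV. curv G' x a b e d * g x c e) = 0" for a b c d
  proof -
    have "pd a (pd b (\<lambda>y. g y c d)) x = pd b (pd a (\<lambda>y. g y c d)) x"
      by (rule schwarz[OF U gs])
    then have E: "(\<Sum>e\<in>UNIV. G' x b c e * pd a (\<lambda>y. g y e d) x + pd a (\<lambda>y. G' y b c e) x * g x e d)
       + (\<Sum>e\<in>UNIV. G' x b d e * pd a (\<lambda>y. g y c e) x + pd a (\<lambda>y. G' y b d e) x * g x c e)
       = (\<Sum>e\<in>UNIV. G' x a c e * pd b (\<lambda>y. g y e d) x + pd b (\<lambda>y. G' y a c e) x * g x e d)
       + (\<Sum>e\<in>UNIV. G' x a d e * pd b (\<lambda>y. g y c e) x + pd b (\<lambda>y. G' y a d e) x * g x c e)"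
      unfolding Eeq by simp
    have dg: "pd a (\<lambda>y. g y e d) x = (\<Sum>f\<in>UNIV. G' x a e f * g x f d) + (\<Sum>f\<in>UNIV. G' x a d f * g x e f)" for a e d
      using LC[OF U(2)] by simp
    show ?thesis
      using claimC_alg[of "G' x" "g x" "\<lambda>a e d. pd a (\<lambda>y. g y e d) x" b c a d "\<lambda>a b c e. pd a (\<lambda>y. G' y b c e) x",
          OF Gx gsym dg E]
      unfolding curv_def by simp
  qed
  have R0: "(\<Sum>c\<in>UNIV. curv G' x a b c c) = 0" for a b
    using trace_zero[of "g x" "\<lambda>e c. curv G' x a b e c", OF det C] .
  have ricsym: "ricci G' x b d = ricci G' x d b" for b d
  proof -
    have pw: "curv G' x c b c d - curv G' x c d c b = - curv G' x b d c c" for c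
    proof -
      have s1: "(\<Sum>e\<in>UNIV. G' x c e c * G' x b d e) = (\<Sum>e\<in>UNIV. G' x c e c * G' x d b e)"
        by (simp add: Gx[of b d])
      have s2: "(\<Sum>e\<in>UNIV. G' x b e c * G' x c d e) = (\<Sum>e\<in>UNIV. G' x b e c * G' x d c e)"
        by (simp add: Gx[of c d])
      have s3: "(\<Sum>e\<in>UNIV. G' x d e c * G' x c b e) = (\<Sum>e\<in>UNIV. G' x d e c * G' x b c e)"
        by (simp add: Gx[of c b])
      show ?thesis unfolding curv_def s1 s2 s3
        using DGsym[of c b d c] DGsym[of b c d c] DGsym[of d c b c] by linarith
    qed
    have "ricci G' x b d - ricci G' x d b = (\<Sum>c\<in>UNIV. curv G' x c b c d - curv G' x c d c b)"
      unfolding ricci_def by (simp add: sum_subtractf)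
    also have "\<dots> = - (\<Sum>c\<in>UNIV. curv G' x b d c c)" unfolding pw by (simp add: sum_negf)
    finally show ?thesis using R0[of b d] by simp
  qed
  have kd1: "(\<lambda>y. k y $ c) differentiable (at x)" for c using smooth_diff[OF ks U(2)] .
  have kd2: "pd b (\<lambda>y. k y $ c) differentiable (at x)" for b c
    using smooth_diff[OF smooth_pd[OF ks] U(2)] .
  have pdcov: "pd a (\<lambda>y. cov_vec G' k y b c) x = pd a (pd b (\<lambda>y. k y $ c)) x
      + ((\<Sum>d\<in>UNIV. G' x b d c * pd a (\<lambda>y. k y $ d) x) + (\<Sum>d\<in>UNIV. pd a (\<lambda>y. G' y b d c) x * k x $ d))" for a b c
  proof -
    have "pd a (\<lambda>y. cov_vec G' k y b c) x
        = pd a (\<lambda>y. pd b (\<lambda>y. k y $ c) y + (\<Sum>d\<in>UNIV. G' y b d c * k y $ d)) x"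
      unfolding cov_vec_def by simp
    also have "\<dots> = pd a (pd b (\<lambda>y. k y $ c)) x + (\<Sum>d\<in>UNIV. G' x b d c * pd a (\<lambda>y. k y $ d) x + pd a (\<lambda>y. G' y b d c) x * k x $ d)"
      using kd2[of b c] by (simp add: pd_add pd_sum pd_mult dG kd1)
    finally show ?thesis by (simp add: sum.distrib)
  qed
  have T1: "(\<Sum>e\<in>UNIV. G' x a e c * cov_vec G' k x b e) = (\<Sum>e\<in>UNIV. G' x a e c * pd b (\<lambda>y. k y $ e) x)
      + (\<Sum>d\<in>UNIV. (\<Sum>e\<in>UNIV. G' x a e c * G' x b d e) * k x $ d)" for a b c
  proof -
    have "(\<Sum>e\<in>UNIV. G' x a e c * (\<Sum>d\<in>UNIV. G' x b d e * k x $ d))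
        = (\<Sum>e\<in>UNIV. \<Sum>d\<in>UNIV. G' x a e c * G' x b d e * k x $ d)"
      by (simp add: sum_distrib_left mult.assoc)
    also have "\<dots> = (\<Sum>d\<in>UNIV. \<Sum>e\<in>UNIV. G' x a e c * G' x b d e * k x $ d)" by (rule sum.swap)
    also have "\<dots> = (\<Sum>d\<in>UNIV. (\<Sum>e\<in>UNIV. G' x a e c * G' x b d e) * k x $ d)"
      by (simp add: sum_distrib_right)
    finally have 1: "(\<Sum>e\<in>UNIV. G' x a e c * (\<Sum>d\<in>UNIV. G' x b d e * k x $ d))
        = (\<Sum>d\<in>UNIV. (\<Sum>e\<in>UNIV. G' x a e c * G' x b d e) * k x $ d)" .
    show ?thesis unfolding cov_vec_def 1[symmetric] by (simp add: distrib_left sum.distrib)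
  qed
  have cv: "cov2_vec G' k x a b c - cov2_vec G' k x b a c = (\<Sum>d\<in>UNIV. curv G' x a b c d * k x $ d)" for a b c
  proof -
    have sw: "pd a (pd b (\<lambda>y. k y $ c)) x = pd b (pd a (\<lambda>y. k y $ c)) x" by (rule schwarz[OF U ks])
    have last: "(\<Sum>e\<in>UNIV. G' x a b e * cov_vec G' k x e c) = (\<Sum>e\<in>UNIV. G' x b a e * cov_vec G' k x e c)"
      by (simp add: Gx[of a b])
    have rhs: "(\<Sum>d\<in>UNIV. curv G' x a b c d * k x $ d) = (\<Sum>d\<in>UNIV. pd a (\<lambda>y. G' y b d c) x * k x $ d)
        - (\<Sum>d\<in>UNIV. pd b (\<lambda>y. G' y a d c) x * k x $ d)
        + (\<Sum>d\<in>UNIV. (\<Sum>e\<in>UNIV. G' x a e c * G' x b d e) * k x $ d)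
        - (\<Sum>d\<in>UNIV. (\<Sum>e\<in>UNIV. G' x b e c * G' x a d e) * k x $ d)"
      unfolding curv_def by (simp add: left_diff_distrib distrib_right sum.distrib sum_subtractf)
    show ?thesis
      unfolding cov2_vec_def pdcov T1 rhs using sw last by linarith
  qed
  define kb where "kb b = (\<Sum>d\<in>UNIV. g x b d * k x $ d)" for b
  have Rk: "(\<Sum>d\<in>UNIV. curv G' x a b c d * k x $ d) = kdelta c a * kb b - kdelta c b * kb a" for a b c
    using cv[of a b c] cov2eq[of a b c] cov2eq[of b a c] gsym[of a b] unfolding kb_def by simp
  define N where "N = real CARD('n)"
  have N2: "N \<ge> 2" using card by (simp add: N_def)
  have ricK: "(\<Sum>d\<in>UNIV. ricci G' x b d * k x $ d) = (N - 1) * kb b" for b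
  proof -
    have "(\<Sum>d\<in>UNIV. ricci G' x b d * k x $ d) = (\<Sum>d\<in>UNIV. \<Sum>c\<in>UNIV. curv G' x c b c d * k x $ d)"
      unfolding ricci_def by (simp add: sum_distrib_right)
    also have "\<dots> = (\<Sum>c\<in>UNIV. \<Sum>d\<in>UNIV. curv G' x c b c d * k x $ d)" by (rule sum.swap)
    also have "\<dots> = (\<Sum>c\<in>UNIV. kdelta c c * kb b - kdelta c b * kb c)" unfolding Rk by simp
    also have "\<dots> = N * kb b - kb b"
      by (simp add: sum_subtractf kdelta_def N_def ifz cong: if_cong)
    finally show ?thesis by (simp add: algebra_simps)
  qed
  have ricK': "(\<Sum>d\<in>UNIV. ricci G' x d b * k x $ d) = (N - 1) * kb b" for b
    using ricK[of b] ricsym[of b] by simp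
  have schK: "(\<Sum>d\<in>UNIV. schouten G' x b d * k x $ d) = kb b" for b
  proof -
    have nz: "(N - 1) * (N - 1 + 2) \<noteq> 0" using N2 by simp
    have "(\<Sum>d\<in>UNIV. schouten G' x b d * k x $ d)
        = (\<Sum>d\<in>UNIV. ((N - 1 + 1) * (ricci G' x b d * k x $ d) + ricci G' x d b * k x $ d)) / ((N - 1) * (N - 1 + 2))"
      unfolding schouten_def Let_def N_def[symmetric] sum_divide_distrib
      by (rule sum.cong) (simp_all add: algebra_simps)
    also have "\<dots> = ((N - 1 + 1) * ((N - 1) * kb b) + (N - 1) * kb b) / ((N - 1) * (N - 1 + 2))"
      by (simp add: sum.distrib sum_distrib_left[symmetric] ricK ricK')
    also have "\<dots> = kb b" using nz by (simp add: field_simps)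
    finally show ?thesis .
  qed
  have schsym: "schouten G' x a b = schouten G' x b a" for a b
    unfolding schouten_def Let_def using ricsym[of a b] by simp
  have "(\<Sum>d\<in>UNIV. proj_weyl G' x a b c d * k x $ d)
      = (\<Sum>d\<in>UNIV. curv G' x a b c d * k x $ d)
        - (kdelta c a * (\<Sum>d\<in>UNIV. schouten G' x b d * k x $ d) - kdelta c b * (\<Sum>d\<in>UNIV. schouten G' x a d * k x $ d))
        + (schouten G' x a b - schouten G' x b a) * (\<Sum>d\<in>UNIV. kdelta c d * k x $ d)"
    unfolding proj_weyl_def
    by (simp add: left_diff_distrib right_diff_distrib distrib_right sum.distrib sum_subtractf
        sum_distrib_left mult.assoc)
  also have "\<dots> = 0" unfolding Rk schK schsym[of a b] by simp
  finally show ?thesis .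
qed




lemma row_nonzero:
  fixes gg :: "'n::finite \<Rightarrow> 'n \<Rightarrow> real"
  assumes "det (\<chi> i j. gg i j) \<noteq> 0"
  shows "\<exists>c. gg a c \<noteq> 0"
proof (rule ccontr)
  assume "\<not> (\<exists>c. gg a c \<noteq> 0)"
  then have "row a (\<chi> i j. gg i j) = (0 :: real^'n)" by (simp add: row_def vec_eq_iff)
  then show False using assms det_zero_row(1) by blast
qed

theorem corollary3p4:
  fixes U :: "(real^'n::finite) set" and G :: "'n christoffel" and x :: "real^'n"
  assumes "CARD('n) \<ge> 2"
    and "open U"
    and "torsion_free_conn U G"
    and "x \<in> U"
    and "\<forall>\<xi> :: real^'n. (\<forall>a b c. (\<Sum>d\<in>UNIV. proj_weyl G x a b c d * \<xi> $ d) = 0) \<longrightarrow> \<xi> = 0"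
  shows "\<not> (\<exists>g k G'. sasaki U g k G' \<and> proj_equiv U G G')"
proof
  assume "\<exists>g k G'. sasaki U g k G' \<and> proj_equiv U G G'"
  then obtain g k G' where sas: "sasaki U g k G'" and pe: "proj_equiv U G G'" by blast
  note card = assms(1) and U = assms(2) assms(4)
  have Gs: "\<And>a b c. smooth_fun U (\<lambda>y. G y a b c)" and GsymU: "\<And>y a b c. y \<in> U \<Longrightarrow> G y a b c = G y b a c"
    using assms(3) unfolding torsion_free_conn_def by auto
  have gsymU: "\<And>y a b. y \<in> U \<Longrightarrow> g y a b = g y b a"
    using sas unfolding sasaki_def pseudo_metric_def by auto
  have gs: "\<And>a b. smooth_fun U (\<lambda>y. g y a b)" and det: "det (\<chi> i j. g x i j) \<noteq> 0"
    using sas U unfolding sasaki_def pseudo_metric_def by auto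
  have G'sym: "\<And>y a b c. y \<in> U \<Longrightarrow> G' y a b c = G' y b a c"
    and LC: "\<And>y a b c. y \<in> U \<Longrightarrow> pd a (\<lambda>y. g y b c) y
        = (\<Sum>d\<in>UNIV. G' y a b d * g y d c) + (\<Sum>d\<in>UNIV. G' y a c d * g y b d)"
    using sas unfolding sasaki_def levi_civita_def by (auto simp: algebra_simps)
  define u where "u y b = (\<Sum>l\<in>UNIV. G' y b l l - G y b l l) / (real CARD('n) + 1)" for y b
  have rel: "G' y a b c = G y a b c + kdelta c a * u y b + kdelta c b * u y a" if y: "y \<in> U" for y a b c
  proof -
    have "G' y a b c - G y a b c = kdelta c a * u y b + kdelta c b * u y a"
      unfolding u_def
      by (rule quad_prop[of "\<lambda>a b c. G' y a b c - G y a b c"])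
         (use GsymU[OF y] G'sym[OF y] geod_prop[OF U(1) y Gs pe] in auto)
    then show ?thesis by simp
  qed
  have ud: "(\<lambda>y. u y a) differentiable (at x)" for a
  proof -
    obtain c where c: "g x a c \<noteq> 0" using row_nonzero[OF det] by blast
    have "continuous (at x) (\<lambda>y. g y a c)" using smooth_cont[OF gs U(2)] .
    from continuous_at_avoid[of x "\<lambda>y. g y a c" 0, OF this c]
    obtain \<epsilon> where \<epsilon>: "\<epsilon> > 0" "\<And>y. dist x y < \<epsilon> \<Longrightarrow> g y a c \<noteq> 0"
      by blast
    define V where "V = ball x \<epsilon> \<inter> U"
    have V: "open V" "x \<in> V" using U \<epsilon> by (auto simp: V_def)
    define K where "K y = pd a (\<lambda>y. g y a c) y - pd c (\<lambda>y. g y a a) y / 2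
       - (\<Sum>d\<in>UNIV. G y a a d * g y d c)" for y
    have eq: "u y a = K y / (2 * g y a c)" if y: "y \<in> V" for y
    proof -
      have yU: "y \<in> U" and gnz: "g y a c \<noteq> 0" using y \<epsilon> by (auto simp: V_def)
      have L1: "(\<Sum>d\<in>UNIV. G' y a a d * g y d c) = (\<Sum>d\<in>UNIV. G y a a d * g y d c) + 2 * u y a * g y a c"
        unfolding rel[OF yU]
        by (simp only: distrib_right sum.distrib) (simp add: kdelta_def ifz cong: if_cong)
      have L2: "pd a (\<lambda>y. g y a c) y = (\<Sum>d\<in>UNIV. G' y a a d * g y d c) + (\<Sum>d\<in>UNIV. G' y c a d * g y a d)"
        using LC[OF yU, of a a c] G'sym[OF yU, of a c] by simp
      have L3: "pd c (\<lambda>y. g y a a) y = 2 * (\<Sum>d\<in>UNIV. G' y c a d * g y a d)"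
        using LC[OF yU, of c a a] gsymU[OF yU, of _ a] by (simp add: mult.commute)
      have "K y = 2 * u y a * g y a c" unfolding K_def using L1 L2 L3 by simp
      then show ?thesis using gnz by simp
    qed
    have Kd: "K differentiable (at x)"
      unfolding K_def
      by (intro differentiable_diff differentiable_divide differentiable_sum differentiable_mult
          smooth_diff[OF smooth_pd[OF gs] U(2)] smooth_diff[OF Gs U(2)] smooth_diff[OF gs U(2)] ballI) auto
    have "(\<lambda>y. K y / (2 * g y a c)) differentiable (at x)"
      by (intro differentiable_divide Kd differentiable_mult smooth_diff[OF gs U(2)]) (use c in auto)
    then show ?thesis using diff_cong_open[OF V, of "\<lambda>y. u y a" "\<lambda>y. K y / (2 * g y a c)"] eq by blast
  qed
  have G'd: "(\<lambda>y. G' y a b c) differentiable (at x)" for a b c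
  proof -
    have "(\<lambda>y. G y a b c + kdelta c a * u y b + kdelta c b * u y a) differentiable (at x)"
      by (intro differentiable_add differentiable_mult smooth_diff[OF Gs U(2)] ud) auto
    then show ?thesis
      using diff_cong_open[OF U(1) U(2), of "\<lambda>y. G' y a b c" "\<lambda>y. G y a b c + kdelta c a * u y b + kdelta c b * u y a"]
        rel by blast
  qed
  have drel: "pd e (\<lambda>y. G' y a b c) x = pd e (\<lambda>y. G y a b c) x
      + kdelta c a * pd e (\<lambda>y. u y b) x + kdelta c b * pd e (\<lambda>y. u y a) x" for e a b c
  proof -
    have "pd e (\<lambda>y. G' y a b c) x = pd e (\<lambda>y. G y a b c + kdelta c a * u y b + kdelta c b * u y a) x"
      by (rule pd_cong_open[OF U(1) U(2)]) (use rel in auto)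
    also have "\<dots> = pd e (\<lambda>y. G y a b c) x + kdelta c a * pd e (\<lambda>y. u y b) x + kdelta c b * pd e (\<lambda>y. u y a) x"
      using smooth_diff[OF Gs U(2)] ud
      by (simp add: pd_add pd_cmult differentiable_add differentiable_mult)
    finally show ?thesis .
  qed
  have W: "proj_weyl G' x a b c d = proj_weyl G x a b c d" for a b c d
    by (rule weyl_inv[of G x G' "u x" "\<lambda>e b. pd e (\<lambda>y. u y b) x"])
       (use GsymU[OF U(2)] rel[OF U(2)] drel card in auto)
  have "(\<Sum>d\<in>UNIV. proj_weyl G x a b c d * k x $ d) = 0" for a b c
    using sasaki_weyl_k[OF U sas G'd card, of a b c] unfolding W .
  then have "k x = 0" using assms(5) by blast
  moreover have "(\<Sum>a\<in>UNIV. \<Sum>b\<in>UNIV. g x a b * k x $ a * k x $ b) = 1"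
    using sas U unfolding sasaki_def by auto
  ultimately show False by simp
qed


end
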